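(* Let $m,n\ge0$. The element $t$ is invertible in the ring $U^{\pm}_{m,n}$.
   Context: $U^{\pm}_{m,n}$ is the commutative ring generated over $\mathbb Z$ by $u_1,u_2,\dots$, $v_1,v_2,\dots$ and $t$, with conventions $u_0=v_0=1$ and $u_i=v_i=0$ for $i<0$, subject to the relations $R_I(w)=0$ for all $I=(i_1,\dots,i_{m+1})\in\mathbb Z^{m+1}$, where $w_i=u_i-tv_{-i-m+n}$ ($i\in\mathbb Z$) and $R_I(w)=\det(w_{i_\alpha+\beta-1})_{1\le\alpha,\beta\le m+1}$. *)

theory Defs
  imports "HOL-Library.Poly_Mapping" "Jordan_Normal_Form.Determinant"
begin

text \<open>Variables of the polynomial ring: U k stands for u_(k+1), V k for v_(k+1), T for t.\<close>
datatype var = U nat | V nat | T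

type_synonym ipoly = "(var \<Rightarrow>\<^sub>0 nat) \<Rightarrow>\<^sub>0 int"

definition Var :: "var \<Rightarrow> ipoly" where
  "Var x = Poly_Mapping.single (Poly_Mapping.single x 1) 1"

definition uu :: "int \<Rightarrow> ipoly" where
  "uu i = (if i = 0 then 1 else if i < 0 then 0 else Var (U (nat (i - 1))))"

definition vv :: "int \<Rightarrow> ipoly" where
  "vv i = (if i = 0 then 1 else if i < 0 then 0 else Var (V (nat (i - 1))))"

definition ww :: "nat \<Rightarrow> nat \<Rightarrow> int \<Rightarrow> ipoly" where
  "ww m n i = uu i - Var T * vv (- i - int m + int n)"

text \<open>R_I(w) = det (w_(i_alpha + beta - 1)), 1 <= alpha, beta <= m+1 (written 0-indexed).\<close>
definition RR :: "nat \<Rightarrow> nat \<Rightarrow> (nat \<Rightarrow> int) \<Rightarrow> ipoly" where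
  "RR m n I = det (mat (m + 1) (m + 1) (\<lambda>(a, b). ww m n (I a + int b)))"

definition gen_ideal :: "'a::comm_ring_1 set \<Rightarrow> 'a set" where
  "gen_ideal S = {x. \<exists>F c. finite F \<and> F \<subseteq> S \<and> x = (\<Sum>g\<in>F. c g * g)}"

definition rel_ideal :: "nat \<Rightarrow> nat \<Rightarrow> ipoly set" where
  "rel_ideal m n = gen_ideal (range (RR m n))"

end

theory Submission
  imports Defs
begin

lemma prod_pert:
  fixes a b :: "'i \<Rightarrow> 'a::comm_ring_1"
  assumes "finite S"
  shows "\<exists>c. (\<Prod>i\<in>S. a i + x * b i) = (\<Prod>i\<in>S. a i) + x * c"
  using assms
proof (induction S rule: finite_induct)
  case empty then show ?case by (rule exI[of _ 0]) simp
next
  case (insert j S)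
  then obtain c where c: "(\<Prod>i\<in>S. a i + x * b i) = (\<Prod>i\<in>S. a i) + x * c" by blast
  show ?case
    by (rule exI[of _ "a j * c + b j * ((\<Prod>i\<in>S. a i) + x * c)"])
      (simp add: insert c algebra_simps)
qed

lemma sum_pert:
  fixes f g :: "'i \<Rightarrow> 'a::comm_ring_1"
  assumes "finite S" and "\<And>p. p \<in> S \<Longrightarrow> \<exists>c. f p = g p + x * c"
  shows "\<exists>c. (\<Sum>p\<in>S. f p) = (\<Sum>p\<in>S. g p) + x * c"
  using assms
proof (induction S rule: finite_induct)
  case empty then show ?case by (intro exI[of _ 0]) simp
next
  case (insert j S)
  then obtain c where c: "(\<Sum>p\<in>S. f p) = (\<Sum>p\<in>S. g p) + x * c" by blast
  obtain d where d: "f j = g j + x * d" using insert by blast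
  show ?case
    by (rule exI[of _ "d + c"]) (simp add: insert c d algebra_simps)
qed

lemma det_pert:
  fixes A B :: "'a::comm_ring_1 mat"
  assumes A: "A \<in> carrier_mat k k" and M: "M \<in> carrier_mat k k"
    and e: "\<And>i j. i < k \<Longrightarrow> j < k \<Longrightarrow> M $$ (i,j) = A $$ (i,j) + x * B $$ (i,j)"
  shows "\<exists>c. det M = det A + x * c"
proof -
  have "\<exists>c. (\<Sum>p\<in>{p. p permutes {0..<k}}. signof p * (\<Prod>i=0..<k. M $$ (i, p i)))
      = (\<Sum>p\<in>{p. p permutes {0..<k}}. signof p * (\<Prod>i=0..<k. A $$ (i, p i))) + x * c"
  proof (rule sum_pert)
    show "finite {p. p permutes {0..<k}}" by (simp add: finite_permutations)
  next
    fix p assume p: "p \<in> {p. p permutes {0..<k}}"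
    have pk: "i < k \<Longrightarrow> p i < k" for i using p by (auto simp: permutes_in_image)
    have "(\<Prod>i=0..<k. M $$ (i, p i)) = (\<Prod>i=0..<k. A $$ (i, p i) + x * B $$ (i, p i))"
      by (rule prod.cong) (auto simp: e pk)
    moreover obtain c where "(\<Prod>i=0..<k. A $$ (i, p i) + x * B $$ (i, p i))
        = (\<Prod>i=0..<k. A $$ (i, p i)) + x * c"
      using prod_pert[of "{0..<k}" "\<lambda>i. A $$ (i, p i)" x "\<lambda>i. B $$ (i, p i)"] by auto
    ultimately show "\<exists>c. signof p * (\<Prod>i=0..<k. M $$ (i, p i))
        = signof p * (\<Prod>i=0..<k. A $$ (i, p i)) + x * c"
      by (intro exI[of _ "signof p * c"]) (simp add: algebra_simps)
  qed
  then show ?thesis unfolding det_def'[OF A] det_def'[OF M] .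
qed

theorem mainTheorem15:
  fixes m n :: nat
  shows "\<exists>p :: ipoly. Var T * p - 1 \<in> rel_ideal m n"
proof -
  define I :: "nat \<Rightarrow> int" where "I = (\<lambda>a. - int a)"
  define M where "M = mat (m + 1) (m + 1) (\<lambda>(a, b). ww m n (I a + int b))"
  define A :: "ipoly mat" where "A = mat (m + 1) (m + 1) (\<lambda>(a, b). uu (I a + int b))"
  define B :: "ipoly mat" where "B = mat (m + 1) (m + 1) (\<lambda>(a, b). - vv (- (I a + int b) - int m + int n))"
  have "\<exists>c. det M = det A + Var T * c"
    proof (rule det_pert[where B = B])
    show "A \<in> carrier_mat (m+1) (m+1)" by (simp add: A_def)
    show "M \<in> carrier_mat (m+1) (m+1)" by (simp add: M_def)
    fix i j assume ij: "i < m+1" "j < m+1"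
    then show "M $$ (i, j) = A $$ (i, j) + Var T * B $$ (i, j)"
      unfolding M_def A_def B_def
      by (simp only: ij index_mat(1) prod.case ww_def diff_conv_add_uminus mult_minus_right)
  qed
  then obtain c where c: "det M = det A + Var T * c" by blast
  have ut: "upper_triangular A"
    by (auto simp: upper_triangular_def A_def I_def uu_def)
  have d1: "det A = prod_list (diag_mat A)"
    by (rule det_upper_triangular[OF ut, of "m+1"]) (simp add: A_def)
  have d2: "diag_mat A = replicate (m+1) 1"
    by (rule nth_equalityI) (auto simp: diag_mat_def A_def I_def uu_def simp del: upt_Suc replicate_Suc)
  have dA: "det A = 1" unfolding d1 d2 by simp
  have RM: "RR m n I = det M" unfolding RR_def M_def ..
  have R: "RR m n I = 1 + Var T * c" unfolding RM c dA ..
  have "Var T * (- c) - 1 = (\<Sum>g\<in>{RR m n I}. (\<lambda>_. -1) g * g)"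
    by (simp add: R algebra_simps)
  then have "Var T * (- c) - 1 \<in> rel_ideal m n"
    unfolding rel_ideal_def gen_ideal_def
    by (intro CollectI exI[of _ "{RR m n I}"] exI[of _ "\<lambda>_. -1"] conjI) auto
  then show ?thesis by blast
qed

end
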